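(* Let $\beta\in\{1,2\}$ and let $r\geq\beta$ be an integer. Let $x\in[0,1]^N$ and let $q=Q^{\Sigma\Delta,r}_{\mathcal{A}_\delta}(x)$ be its $r$-th order $\Sigma\Delta$ quantization, whose state vector $u$ satisfies $x-q=D^ru$ and $\|u\|_\infty\leq\delta/2$. Let $\hat x$ be a solution to $$\min_{z\in\mathbb{R}^N}\|(D^\beta)^Tz\|_1\quad\text{subject to}\quad \|D^{-r}(z-q)\|_\infty\leq\delta/2.$$ Then for every integer $1\leq s\leq N$, $$\|\hat x-x\|_2\leq C\Big(\sqrt{s}\,\delta+\sqrt{\sigma_s((D^\beta)^Tx)\,\delta}\Big),$$ where $C$ is a constant independent of $x$.
   Context: $D$ is the $N\times N$ matrix with $1$ on the diagonal, $-1$ on the subdiagonal, $0$ elsewhere. For $z\in\mathbb{R}^N$, $\sigma_s(z)=\min_{v\ s\text{-sparse}}\|v-z\|_1$ is the $\ell_1$ error of the best $s$-term approximation. The alphabet is $\mathcal{A}_\delta=\{c+J\delta: J\in\mathbb{Z},\ J_1\leq J\leq J_2\}$, and $Q_{\mathcal{A}}(z)$ is an element of $\mathcal{A}$ nearest to $z$. The $r$-th order $\Sigma\Delta$ quantization of $y\in\mathbb{R}^N$: with $u_i=0$ for $i\leq0$, set $q_i=Q_{\mathcal{A}}\big(\sum_{j=1}^r(-1)^{j-1}\binom{r}{j}u_{i-j}+y_i\big)$ and define $u_i$ by $(D^ru)_i=y_i-q_i$, $i=1,\dots,N$. The alphabet is assumed to have enough levels that $\|u\|_\infty\leq\delta/2$.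 *)

theory Defs
  imports Complex_Main "Jordan_Normal_Form.Matrix"
begin

text \<open>Vectors in R^N are Jordan_Normal_Form vectors of dimension N (indices 0..N-1),
  N x N matrices are elements of carrier_mat N N.\<close>

definition l1_norm :: "real vec \<Rightarrow> real" where
  "l1_norm v = (\<Sum>i<dim_vec v. \<bar>v $ i\<bar>)"

definition l2_norm :: "real vec \<Rightarrow> real" where
  "l2_norm v = sqrt (\<Sum>i<dim_vec v. (v $ i)^2)"

definition linf_norm :: "real vec \<Rightarrow> real" where
  "linf_norm v = Max (insert 0 {\<bar>v $ i\<bar> | i. i < dim_vec v})"

definition Dmat :: "nat \<Rightarrow> real mat" where
  "Dmat N = mat N N (\<lambda>(i,j). if i = j then 1 else if i = j + 1 then -1 else 0)"

definition mat_inv :: "nat \<Rightarrow> real mat \<Rightarrow> real mat" where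
  "mat_inv N A = (SOME B. B \<in> carrier_mat N N \<and> inverts_mat A B \<and> inverts_mat B A)"

definition sigma_s :: "nat \<Rightarrow> real vec \<Rightarrow> real" where
  "sigma_s s z = Inf {l1_norm (v - z) | v. v \<in> carrier_vec (dim_vec z)
                       \<and> card {i. i < dim_vec z \<and> v $ i \<noteq> 0} \<le> s}"

definition alphabet :: "real \<Rightarrow> real \<Rightarrow> int \<Rightarrow> int \<Rightarrow> real set" where
  "alphabet c \<delta> J1 J2 = {c + of_int J * \<delta> | J. J1 \<le> J \<and> J \<le> J2}"

definition nearest :: "real set \<Rightarrow> real \<Rightarrow> real \<Rightarrow> bool" where
  "nearest A z a \<longleftrightarrow> a \<in> A \<and> (\<forall>b\<in>A. \<bar>z - a\<bar> \<le> \<bar>z - b\<bar>)"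

text \<open>q is an r-th order Sigma-Delta quantization of y with state vector u
  (0-based indices; u_k = 0 for k < 0, i.e. terms with j > i vanish):
  q_i = Q_A(sum_{j=1}^r (-1)^(j-1) binom(r,j) u_{i-j} + y_i) and (D^r u)_i = y_i - q_i.\<close>
definition sigma_delta :: "nat \<Rightarrow> real set \<Rightarrow> real vec \<Rightarrow> real vec \<Rightarrow> real vec \<Rightarrow> bool" where
  "sigma_delta r A y q u \<longleftrightarrow>
     (let N = dim_vec y in
       q \<in> carrier_vec N \<and> u \<in> carrier_vec N \<and>
       (\<forall>i<N. nearest A
                 ((\<Sum>j\<in>{1..r}. if j \<le> i then (-1)^(j-1) * real (r choose j) * u $ (i - j) else 0) + y $ i)
                 (q $ i)) \<and>
       (\<forall>i<N. ((Dmat N ^\<^sub>m r) *\<^sub>v u) $ i = y $ i - q $ i))"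

definition tv_feasible :: "nat \<Rightarrow> real \<Rightarrow> real vec \<Rightarrow> real vec \<Rightarrow> bool" where
  "tv_feasible r \<delta> q z \<longleftrightarrow> (let N = dim_vec q in
     z \<in> carrier_vec N \<and> linf_norm (mat_inv N (Dmat N ^\<^sub>m r) *\<^sub>v (z - q)) \<le> \<delta> / 2)"

definition tv_solution :: "nat \<Rightarrow> nat \<Rightarrow> real \<Rightarrow> real vec \<Rightarrow> real vec \<Rightarrow> bool" where
  "tv_solution \<beta> r \<delta> q xhat \<longleftrightarrow> (let N = dim_vec q in
     tv_feasible r \<delta> q xhat \<and>
     (\<forall>z. tv_feasible r \<delta> q z \<longrightarrow>
        l1_norm (transpose_mat (Dmat N ^\<^sub>m \<beta>) *\<^sub>v xhat) \<le> l1_norm (transpose_mat (Dmat N ^\<^sub>m \<beta>) *\<^sub>v z)))"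

end

theory Submission imports Defs "Jordan_Normal_Form.Determinant" begin

lemma Dmat_carrier[simp]: "Dmat N \<in> carrier_mat N N" by (simp add: Dmat_def)
lemma Dmat_dims[simp]: "dim_row (Dmat N) = N" "dim_col (Dmat N) = N" by (simp_all add: Dmat_def)
lemma Dmat_index: "i<N \<Longrightarrow> j<N \<Longrightarrow> Dmat N $$ (i,j) = (if i = j then 1 else if i = j+1 then -1 else 0)"
  by (simp add: Dmat_def)

lemma det_Dmat: "det (Dmat N) = 1"
proof -
  have "det (Dmat N) = prod_list (diag_mat (Dmat N))"
    by (rule det_lower_triangular[of N]) (auto simp: Dmat_index)
  also have "diag_mat (Dmat N) = map (\<lambda>i. 1) [0..<N]"
    by (auto simp: diag_mat_def Dmat_index)
  finally show ?thesis by (simp add: map_replicate_const)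
qed

lemma det_Dpow: "det (Dmat N ^\<^sub>m k) = 1"
  by (induct k) (auto simp: det_mult[of _ N] det_Dmat det_one)

lemma mat_inv_Dpow:
  fixes N k :: nat
  defines "A \<equiv> Dmat N ^\<^sub>m k"
  shows "mat_inv N A \<in> carrier_mat N N \<and> mat_inv N A * A = 1\<^sub>m N \<and> A * mat_inv N A = 1\<^sub>m N"
proof -
  have "A \<in> Units (ring_mat TYPE(real) N ())"
    by (rule det_non_zero_imp_unit) (auto simp: det_Dpow A_def)
  then obtain B where "B \<in> carrier_mat N N" "B * A = 1\<^sub>m N" "A * B = 1\<^sub>m N"
    by (auto simp: Units_def ring_mat_def)
  moreover have dA: "dim_row A = N" "dim_col A = N" by (simp_all add: A_def)
  ultimately have "\<exists>B. B \<in> carrier_mat N N \<and> inverts_mat A B \<and> inverts_mat B A"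
    unfolding inverts_mat_def by auto
  from someI_ex[OF this] show ?thesis unfolding mat_inv_def inverts_mat_def using dA by auto
qed

lemma pow_mat_add: "A \<in> carrier_mat n n \<Longrightarrow> A ^\<^sub>m (a + b) = A ^\<^sub>m a * A ^\<^sub>m b"
proof (induct b)
  case 0 then show ?case by simp
next
  case (Suc b)
  then show ?case by (simp add: assoc_mult_mat[of _ n n _ n _ n])
qed

lemma Dmv: assumes "v \<in> carrier_vec N" "i < N"
  shows "(Dmat N *\<^sub>v v) $ i = v$i - (if i = 0 then 0 else v$(i-1))"
proof -
  have "(Dmat N *\<^sub>v v) $ i = (\<Sum>j\<in>{0..<N}. Dmat N $$ (i,j) * v$j)"
    using assms by (simp add: mult_mat_vec_def scalar_prod_def row_def)
  also have "\<dots> = (\<Sum>j\<in>{0..<N}. (if j = i then v$i else 0) - (if j = i - 1 \<and> i \<noteq> 0 then v$j else 0))"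
    by (rule sum.cong) (use assms in \<open>auto simp: Dmat_index\<close>)
  also have "\<dots> = v$i - (if i = 0 then 0 else v$(i-1))"
    using assms by (simp add: sum_subtractf sum.delta)
  finally show ?thesis .
qed

lemma DTmv: assumes "v \<in> carrier_vec N" "i < N"
  shows "(transpose_mat (Dmat N) *\<^sub>v v) $ i = v$i - (if i + 1 < N then v$(i+1) else 0)"
proof -
  have "(transpose_mat (Dmat N) *\<^sub>v v) $ i = (\<Sum>j\<in>{0..<N}. Dmat N $$ (j,i) * v$j)"
    using assms by (simp add: mult_mat_vec_def scalar_prod_def row_def)
  also have "\<dots> = (\<Sum>j\<in>{0..<N}. (if j = i then v$i else 0) - (if j = i + 1 then v$j else 0))"
    by (rule sum.cong) (use assms in \<open>auto simp: Dmat_index\<close>)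
  also have "\<dots> = v$i - (if i + 1 < N then v$(i+1) else 0)"
    using assms by (simp add: sum_subtractf sum.delta)
  finally show ?thesis .
qed

lemma linf_ge: "i < dim_vec v \<Longrightarrow> \<bar>v$i\<bar> \<le> linf_norm v"
proof -
  assume i: "i < dim_vec v"
  have "{\<bar>v $ i\<bar> | i. i < dim_vec v} = (\<lambda>i. \<bar>v$i\<bar>) ` {..<dim_vec v}" by auto
  then have fin: "finite (insert 0 {\<bar>v $ i\<bar> | i. i < dim_vec v})" by simp
  show ?thesis unfolding linf_norm_def by (rule Max_ge[OF fin]) (use i in auto)
qed

lemma D_bound:
  assumes v: "v \<in> carrier_vec N" and b: "\<forall>i<N. \<bar>v$i\<bar> \<le> b" and j: "j < N"
  shows "\<bar>(Dmat N *\<^sub>v v)$j\<bar> \<le> 2 * b"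
proof -
  have vj: "\<bar>v$j\<bar> \<le> b" using b j by blast
  have b0: "0 \<le> b" using vj abs_ge_zero[of "v$j"] by linarith
  show ?thesis
  proof (cases "j = 0")
    case True
    have "(Dmat N *\<^sub>v v)$j = v$j" using Dmv[OF v j] True by simp
    then show ?thesis using vj b0 by linarith
  next
    case False
    have "j - 1 < N" using j by simp
    then have vj1: "\<bar>v$(j-1)\<bar> \<le> b" using b by blast
    have "(Dmat N *\<^sub>v v)$j = v$j - v$(j-1)" using Dmv[OF v j] False by simp
    moreover have "\<bar>v$j - v$(j-1)\<bar> \<le> \<bar>v$j\<bar> + \<bar>v$(j-1)\<bar>" by (rule abs_triangle_ineq4)
    ultimately show ?thesis using vj vj1 by linarith
  qed
qed

lemma Dpow_bound:
  "v \<in> carrier_vec N \<Longrightarrow> (\<forall>i<N. \<bar>v$i\<bar> \<le> b) \<Longrightarrow> i < N \<Longrightarrow> \<bar>(Dmat N ^\<^sub>m k *\<^sub>v v)$i\<bar> \<le> 2^k * b"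
proof (induct k arbitrary: v b i)
  case 0
  have "Dmat N ^\<^sub>m 0 = 1\<^sub>m N" by simp
  then have "Dmat N ^\<^sub>m 0 *\<^sub>v v = v" using 0 by simp
  then show ?case using 0 by simp
next
  case (Suc k)
  have Dv: "Dmat N *\<^sub>v v \<in> carrier_vec N" by (rule mult_mat_vec_carrier[OF Dmat_carrier Suc.prems(1)])
  have b: "\<forall>i<N. \<bar>(Dmat N *\<^sub>v v)$i\<bar> \<le> 2 * b"
    by (intro allI impI D_bound[OF Suc.prems(1,2)])
  have "Dmat N ^\<^sub>m Suc k = Dmat N ^\<^sub>m k * Dmat N" by simp
  then have "Dmat N ^\<^sub>m Suc k *\<^sub>v v = Dmat N ^\<^sub>m k *\<^sub>v (Dmat N *\<^sub>v v)"
    using assoc_mult_mat_vec[of "Dmat N ^\<^sub>m k" N N "Dmat N" N v] Suc.prems(1) by simp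
  moreover have "\<bar>(Dmat N ^\<^sub>m k *\<^sub>v (Dmat N *\<^sub>v v))$i\<bar> \<le> 2^k * (2 * b)"
    by (rule Suc.hyps[OF Dv b Suc.prems(3)])
  ultimately show ?case by simp
qed

lemma shift_sum: fixes f :: "nat \<Rightarrow> real" assumes f: "\<And>i. 0 \<le> f i"
  shows "(\<Sum>i<N. if i+1<N then f(i+1) else 0) \<le> (\<Sum>i<N. (f i::real))"
proof (cases N)
  case 0 then show ?thesis by simp
next
  case (Suc M)
  have "(\<Sum>i<N. if i+1<N then f(i+1) else 0) = (\<Sum>i<M. f (Suc i))"
    unfolding Suc by (simp add: lessThan_Suc)
  also have "\<dots> \<le> f 0 + (\<Sum>i<M. f (Suc i))" using f[of 0] by simp
  also have "\<dots> = (\<Sum>i<N. f i)" unfolding Suc by (rule sum.lessThan_Suc_shift[symmetric])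
  finally show ?thesis .
qed

lemma DT_l2: assumes v: "v \<in> carrier_vec N"
  shows "(\<Sum>i<N. ((transpose_mat (Dmat N) *\<^sub>v v)$i)^2) \<le> 4 * (\<Sum>i<N. (v$i)^2)"
proof -
  have "(\<Sum>i<N. ((transpose_mat (Dmat N) *\<^sub>v v)$i)^2)
     \<le> (\<Sum>i<N. 2 * (v$i)^2 + 2 * (if i+1<N then (v$(i+1))^2 else 0))"
  proof (rule sum_mono)
    fix i assume "i \<in> {..<N}"
    then have i: "i < N" by simp
    have sq: "(a - b)^2 \<le> 2*a^2 + 2*b^2" for a b :: real
    proof -
      have "0 \<le> (a+b)^2" by simp
      then show ?thesis unfolding power2_diff power2_sum by linarith
    qed
    then show "((transpose_mat (Dmat N) *\<^sub>v v)$i)^2 \<le> 2 * (v$i)^2 + 2 * (if i+1<N then (v$(i+1))^2 else 0)"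
    proof (cases "i+1<N")
      case True
      then show ?thesis unfolding DTmv[OF v i] using sq[of "v$i" "v$(i+1)"] by simp
    next
      case False
      have "(v$i)^2 \<le> 2 * (v$i)^2" by simp
      then show ?thesis unfolding DTmv[OF v i] using False by simp
    qed
  qed
  also have "\<dots> = 2 * (\<Sum>i<N. (v$i)^2) + 2 * (\<Sum>i<N. if i+1<N then (v$(i+1))^2 else 0)"
    by (simp add: sum.distrib sum_distrib_left)
  also have "\<dots> \<le> 4 * (\<Sum>i<N. (v$i)^2)"
    using shift_sum[of "\<lambda>i. (v$i)^2" N] by simp
  finally show ?thesis .
qed

lemma DTpow_l2: assumes v: "v \<in> carrier_vec N"
  shows "(\<Sum>i<N. ((transpose_mat (Dmat N ^\<^sub>m k) *\<^sub>v v)$i)^2) \<le> 4^k * (\<Sum>i<N. (v$i)^2)"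
proof (induct k)
  case 0
  then show ?case using v by simp
next
  case (Suc k)
  have "transpose_mat (Dmat N ^\<^sub>m Suc k) *\<^sub>v v = transpose_mat (Dmat N) *\<^sub>v (transpose_mat (Dmat N ^\<^sub>m k) *\<^sub>v v)"
    using v by (simp add: transpose_mult[of _ N N _ N] assoc_mult_mat_vec[of _ N N _ N])
  moreover have "transpose_mat (Dmat N ^\<^sub>m k) *\<^sub>v v \<in> carrier_vec N"
    by (rule mult_mat_vec_carrier[of _ N N]) (use v in simp_all)
  ultimately show ?case using DT_l2[of "transpose_mat (Dmat N ^\<^sub>m k) *\<^sub>v v" N] Suc by simp
qed

lemma mv_scalar: fixes M :: "real mat" and a h :: "real vec" assumes M: "M \<in> carrier_mat N N" and a: "a \<in> carrier_vec N" and h: "h \<in> carrier_vec N"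
  shows "(\<Sum>i<N. (M *\<^sub>v a)$i * h$i) = (\<Sum>i<N. a$i * (transpose_mat M *\<^sub>v h)$i)"
proof -
  have "(\<Sum>i<N. (M *\<^sub>v a)$i * h$i) = (\<Sum>i<N. \<Sum>j<N. M $$ (i,j) * a$j * h$i)"
    using M a by (simp add: mult_mat_vec_def scalar_prod_def row_def sum_distrib_right atLeast0LessThan)
  also have "\<dots> = (\<Sum>j<N. \<Sum>i<N. M $$ (i,j) * a$j * h$i)" by (rule sum.swap)
  also have "\<dots> = (\<Sum>j<N. a$j * (\<Sum>i<N. M $$ (i,j) * h$i))"
    unfolding sum_distrib_left by (intro sum.cong refl) (simp add: mult_ac)
  also have "\<dots> = (\<Sum>j<N. a$j * (transpose_mat M *\<^sub>v h)$j)"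
    using M h by (simp add: mult_mat_vec_def scalar_prod_def row_def atLeast0LessThan)
  finally show ?thesis .
qed

lemma cs_sum: fixes g :: "nat \<Rightarrow> real" assumes "finite T"
  shows "(\<Sum>i\<in>T. \<bar>g i\<bar>) \<le> sqrt (real (card T)) * sqrt (\<Sum>i\<in>T. (g i)^2)"
proof (cases "T = {}")
  case True then show ?thesis by simp
next
  case False
  define n where "n = real (card T)"
  have n: "n > 0" using False assms by (simp add: n_def card_gt_0_iff)
  define m where "m = (\<Sum>i\<in>T. \<bar>g i\<bar>) / n"
  have "0 \<le> (\<Sum>i\<in>T. (\<bar>g i\<bar> - m)^2)" by (simp add: sum_nonneg)
  also have "\<dots> = (\<Sum>i\<in>T. (g i)^2 - 2 * m * \<bar>g i\<bar> + m^2)"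
    by (rule sum.cong) (auto simp: power2_diff)
  also have "\<dots> = (\<Sum>i\<in>T. (g i)^2) - 2 * m * (\<Sum>i\<in>T. \<bar>g i\<bar>) + m^2 * n"
    by (simp add: sum.distrib sum_subtractf sum_distrib_left n_def)
  also have "\<dots> = (\<Sum>i\<in>T. (g i)^2) - (\<Sum>i\<in>T. \<bar>g i\<bar>)^2 / n"
    using n by (simp add: m_def power2_eq_square field_simps)
  finally have "(\<Sum>i\<in>T. \<bar>g i\<bar>)^2 \<le> n * (\<Sum>i\<in>T. (g i)^2)"
    using n by (simp add: field_simps)
  then have "sqrt ((\<Sum>i\<in>T. \<bar>g i\<bar>)^2) \<le> sqrt (n * (\<Sum>i\<in>T. (g i)^2))"
    using real_sqrt_le_mono by blast
  then show ?thesis by (simp add: n_def real_sqrt_mult sum_nonneg)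
qed

lemma term_bound: fixes g vv yy :: real assumes "\<not> t \<Longrightarrow> vv = 0"
  shows "\<bar>g\<bar> \<le> 2 * (if t then \<bar>g\<bar> else 0) + 2 * \<bar>vv - yy\<bar> + (\<bar>yy + g\<bar> - \<bar>yy\<bar>)"
proof (cases t)
  case True
  have "\<bar>yy\<bar> \<le> \<bar>yy + g\<bar> + \<bar>g\<bar>" using abs_triangle_ineq4[of "yy + g" g] by simp
  then have "\<bar>g\<bar> \<le> 2 * \<bar>g\<bar> + 2 * \<bar>vv - yy\<bar> + (\<bar>yy + g\<bar> - \<bar>yy\<bar>)"
    using abs_ge_zero[of "vv - yy"] abs_ge_zero[of g] by linarith
  then show ?thesis using True by simp
next
  case False
  have "\<bar>g\<bar> \<le> \<bar>yy + g\<bar> + \<bar>yy\<bar>" using abs_triangle_ineq4[of "yy + g" yy] by simp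
  then show ?thesis using False assms by simp
qed

lemma quad_bound: fixes H A P :: real
  assumes "0 \<le> H" "0 \<le> A" "0 \<le> P" "H^2 - A * H \<le> P"
  shows "H \<le> A + sqrt P"
proof (cases "H \<le> A")
  case True
  then show ?thesis using assms(3) by (smt (verit) real_sqrt_ge_zero)
next
  case False
  have "A * A \<le> A * H" using False assms(2) by (simp add: mult_left_mono)
  then have "(H - A)^2 \<le> H^2 - A * H"
    by (simp add: power2_eq_square algebra_simps)
  then have "(H - A)^2 \<le> P" using assms(4) by linarith
  then have "sqrt ((H - A)^2) \<le> sqrt P" using real_sqrt_le_mono by blast
  then show ?thesis using False by simp
qed

theorem theorem2:
  fixes \<beta> r :: nat
  assumes "\<beta> \<in> {1, 2}" and "\<beta> \<le> r"
  shows "\<exists>C :: real. \<forall>(N::nat) (\<delta>::real) (c::real) (J1::int) (J2::int) x q u xhat (s::nat).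
           \<delta> > 0 \<longrightarrow> J1 \<le> J2 \<longrightarrow>
           x \<in> carrier_vec N \<longrightarrow> (\<forall>i<N. 0 \<le> x $ i \<and> x $ i \<le> 1) \<longrightarrow>
           sigma_delta r (alphabet c \<delta> J1 J2) x q u \<longrightarrow>
           linf_norm u \<le> \<delta> / 2 \<longrightarrow>
           tv_solution \<beta> r \<delta> q xhat \<longrightarrow>
           1 \<le> s \<longrightarrow> s \<le> N \<longrightarrow>
           l2_norm (xhat - x) \<le>
             C * (sqrt (real s) * \<delta> + sqrt (sigma_s s (transpose_mat (Dmat N ^\<^sub>m \<beta>) *\<^sub>v x) * \<delta>))"
proof (rule exI[of _ "2^(r+1)"], intro allI impI)
  fix N :: nat and \<delta> c :: real and J1 J2 :: int and x q u xhat :: "real vec" and s :: nat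
  assume \<delta>: "\<delta> > 0" and x: "x \<in> carrier_vec N"
    and sd: "sigma_delta r (alphabet c \<delta> J1 J2) x q u" and ul: "linf_norm u \<le> \<delta> / 2"
    and sol: "tv_solution \<beta> r \<delta> q xhat" and s1: "1 \<le> s" and sN: "s \<le> N"
  let ?D = "Dmat N"
  have dimx: "dim_vec x = N" using x by simp
  from sd have q: "q \<in> carrier_vec N" and u: "u \<in> carrier_vec N"
    and Du: "\<forall>i<N. ((?D ^\<^sub>m r) *\<^sub>v u) $ i = x$i - q$i"
    unfolding sigma_delta_def Let_def dimx by auto
  have Du': "?D ^\<^sub>m r *\<^sub>v u = x - q"
    by (rule eq_vecI) (use Du q x u in auto)
  have dimq: "dim_vec q = N" using q by simp
  define B where "B = mat_inv N (?D ^\<^sub>m r)"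
  have B: "B \<in> carrier_mat N N" "B * ?D ^\<^sub>m r = 1\<^sub>m N" "?D ^\<^sub>m r * B = 1\<^sub>m N"
    using mat_inv_Dpow[of N r] unfolding B_def by auto
  define M where "M = transpose_mat (?D ^\<^sub>m \<beta>)"
  have Mc: "M \<in> carrier_mat N N" unfolding M_def by simp
  from sol have xh: "xhat \<in> carrier_vec N" and xhl: "linf_norm (B *\<^sub>v (xhat - q)) \<le> \<delta>/2"
    and opt: "\<And>z. tv_feasible r \<delta> q z \<Longrightarrow> l1_norm (M *\<^sub>v xhat) \<le> l1_norm (M *\<^sub>v z)"
    unfolding tv_solution_def tv_feasible_def Let_def dimq B_def M_def by auto
  have "B *\<^sub>v (x - q) = B *\<^sub>v (?D ^\<^sub>m r *\<^sub>v u)" by (simp add: Du')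
  also have "\<dots> = (B * ?D ^\<^sub>m r) *\<^sub>v u"
    by (rule assoc_mult_mat_vec[symmetric, OF B(1) pow_carrier_mat[OF Dmat_carrier] u])
  also have "\<dots> = u" unfolding B(2) using u by simp
  finally have Bx: "B *\<^sub>v (x - q) = u" .
  have feas_x: "tv_feasible r \<delta> q x"
    unfolding tv_feasible_def Let_def dimq B_def[symmetric] using x Bx ul by simp
  have optx: "l1_norm (M *\<^sub>v xhat) \<le> l1_norm (M *\<^sub>v x)" by (rule opt[OF feas_x])
  define w' where "w' = B *\<^sub>v (xhat - q)"
  have w'c: "w' \<in> carrier_vec N" unfolding w'_def using B(1) xh q by simp
  have "?D ^\<^sub>m r *\<^sub>v w' = (?D ^\<^sub>m r * B) *\<^sub>v (xhat - q)"
    unfolding w'_def by (rule assoc_mult_mat_vec[symmetric, OF pow_carrier_mat[OF Dmat_carrier] B(1)]) (use xh q in simp)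
  also have "\<dots> = xhat - q" unfolding B(3) using xh q by simp
  finally have Dw': "?D ^\<^sub>m r *\<^sub>v w' = xhat - q" .
  define w where "w = w' - u"
  define h where "h = xhat - x"
  have hc: "h \<in> carrier_vec N" unfolding h_def using xh x by simp
  have wc: "w \<in> carrier_vec N" unfolding w_def using w'c u by simp
  have "?D ^\<^sub>m r *\<^sub>v w = ?D ^\<^sub>m r *\<^sub>v w' - ?D ^\<^sub>m r *\<^sub>v u"
    unfolding w_def using mult_minus_distrib_mat_vec[of "?D ^\<^sub>m r" N N w' u] w'c u by simp
  then have Dw: "?D ^\<^sub>m r *\<^sub>v w = h" unfolding Dw' Du' h_def
    by (intro eq_vecI) (use xh x q in auto)
  have wb: "\<forall>i<N. \<bar>w$i\<bar> \<le> \<delta>"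
  proof (intro allI impI)
    fix i assume i: "i < N"
    have "\<bar>w'$i\<bar> \<le> linf_norm w'" using linf_ge[of i w'] w'c i by simp
    then have "\<bar>w'$i\<bar> \<le> \<delta>/2" using xhl[folded w'_def] by linarith
    moreover have "\<bar>u$i\<bar> \<le> \<delta>/2" using linf_ge[of i u] u i ul by simp
    ultimately show "\<bar>w$i\<bar> \<le> \<delta>" unfolding w_def using i w'c u by simp
  qed
  define a where "a = ?D ^\<^sub>m (r - \<beta>) *\<^sub>v w"
  have ac: "a \<in> carrier_vec N" unfolding a_def by (rule mult_mat_vec_carrier[OF pow_carrier_mat[OF Dmat_carrier] wc])
  have ab: "\<forall>i<N. \<bar>a$i\<bar> \<le> 2^(r-\<beta>) * \<delta>"
    unfolding a_def by (intro allI impI Dpow_bound[OF wc wb])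
  have pw: "?D ^\<^sub>m r = ?D ^\<^sub>m \<beta> * ?D ^\<^sub>m (r - \<beta>)"
    using pow_mat_add[of ?D N \<beta> "r - \<beta>"] assms(2) by simp
  have ha: "h = ?D ^\<^sub>m \<beta> *\<^sub>v a"
    unfolding a_def Dw[symmetric] pw using wc by (simp add: assoc_mult_mat_vec[of _ N N _ N])
  define g where "g = M *\<^sub>v h"
  define y where "y = M *\<^sub>v x"
  have gc: "g \<in> carrier_vec N" unfolding g_def by (rule mult_mat_vec_carrier[OF Mc hc])
  have yc: "y \<in> carrier_vec N" unfolding y_def by (rule mult_mat_vec_carrier[OF Mc x])
  have "xhat = x + h" unfolding h_def by (intro eq_vecI) (use xh x in auto)
  then have "M *\<^sub>v xhat = y + g" unfolding y_def g_def
    using mult_add_distrib_mat_vec[OF Mc x hc] by simp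
  then have optyg: "(\<Sum>i<N. \<bar>y$i + g$i\<bar>) \<le> (\<Sum>i<N. \<bar>y$i\<bar>)"
    using optx yc gc unfolding y_def[symmetric] l1_norm_def by simp
  define H where "H = l2_norm h"
  have H: "H = sqrt (\<Sum>i<N. (h$i)^2)" unfolding H_def l2_norm_def using hc by simp
  have H0: "0 \<le> H" unfolding H by (simp add: sum_nonneg)
  have HH: "H^2 = (\<Sum>i<N. (h$i)^2)" unfolding H by (simp add: sum_nonneg)
  define K where "K = 2^(r-\<beta>) * \<delta>"
  have K0: "0 \<le> K" unfolding K_def using \<delta> by simp
  have "(\<Sum>i<N. (h$i)^2) = (\<Sum>i<N. (?D ^\<^sub>m \<beta> *\<^sub>v a)$i * h$i)"
    by (simp add: power2_eq_square ha[symmetric])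
  also have "\<dots> = (\<Sum>i<N. a$i * g$i)"
    unfolding g_def M_def by (rule mv_scalar[OF _ ac hc]) simp
  also have "\<dots> \<le> (\<Sum>i<N. K * \<bar>g$i\<bar>)"
  proof (rule sum_mono)
    fix i assume "i \<in> {..<N}"
    then have "\<bar>a$i\<bar> \<le> K" using ab unfolding K_def by simp
    then have "\<bar>a$i\<bar> * \<bar>g$i\<bar> \<le> K * \<bar>g$i\<bar>" by (rule mult_right_mono) simp
    moreover have "a$i * g$i \<le> \<bar>a$i * g$i\<bar>" by (rule abs_ge_self)
    moreover have "\<bar>a$i * g$i\<bar> = \<bar>a$i\<bar> * \<bar>g$i\<bar>" by (rule abs_mult)
    ultimately show "a$i * g$i \<le> K * \<bar>g$i\<bar>" by linarith
  qed
  also have "\<dots> = K * (\<Sum>i<N. \<bar>g$i\<bar>)" by (simp add: sum_distrib_left)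
  finally have H2g: "H^2 \<le> K * (\<Sum>i<N. \<bar>g$i\<bar>)" unfolding HH .
  have g2: "sqrt (\<Sum>i<N. (g$i)^2) \<le> 2^\<beta> * H"
  proof -
    have "(\<Sum>i<N. (g$i)^2) \<le> 4^\<beta> * (\<Sum>i<N. (h$i)^2)"
      unfolding g_def M_def by (rule DTpow_l2[OF hc])
    also have "\<dots> = (2^\<beta>)^2 * (\<Sum>i<N. (h$i)^2)" by (simp add: power2_eq_square power_mult_distrib[symmetric])
    finally have "sqrt (\<Sum>i<N. (g$i)^2) \<le> sqrt ((2^\<beta>)^2 * (\<Sum>i<N. (h$i)^2))"
      using real_sqrt_le_mono by blast
    also have "\<dots> = 2^\<beta> * H" unfolding H by (simp add: real_sqrt_mult)
    finally show ?thesis .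
  qed
  define A where "A = 2^(r+1) * \<delta> * sqrt (real s)"
  have A0: "0 \<le> A" unfolding A_def using \<delta> by simp
  have KA: "K * (2 * (sqrt (real s) * (2^\<beta> * H))) = A * H"
  proof -
    have e: "(2::real)^(r+1) = 2 * 2^(r-\<beta>) * 2^\<beta>" using assms(2) by (simp add: mult.assoc power_add[symmetric])
    show ?thesis unfolding K_def A_def e by (simp add: ac_simps)
  qed
  define S where "S = {l1_norm (v - y) | v. v \<in> carrier_vec (dim_vec y) \<and> card {i. i < dim_vec y \<and> v $ i \<noteq> 0} \<le> s}"
  have dimy: "dim_vec y = N" using yc by simp
  have Sne: "S \<noteq> {}"
  proof -
    have e0: "{i. i < N \<and> 0\<^sub>v N $ i \<noteq> (0::real)} = {}" by auto
    have "l1_norm (0\<^sub>v N - y) \<in> S" unfolding S_def dimy by (intro CollectI exI[of _ "0\<^sub>v N"]) (simp add: e0)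
    then show ?thesis by blast
  qed
  have bnd: "H^2 - A * H \<le> 2 * K * t" if "t \<in> S" for t
  proof -
    from that obtain v where t: "t = l1_norm (v - y)" and vc: "v \<in> carrier_vec N"
      and card: "card {i. i < N \<and> v $ i \<noteq> 0} \<le> s" unfolding S_def dimy by blast
    define T where "T = {i. i < N \<and> v $ i \<noteq> 0}"
    have fT: "finite T" unfolding T_def by simp
    have t': "t = (\<Sum>i<N. \<bar>v$i - y$i\<bar>)" unfolding t l1_norm_def using vc yc by simp
    have "(\<Sum>i<N. \<bar>g$i\<bar>) \<le> (\<Sum>i<N. 2 * (if v$i \<noteq> 0 then \<bar>g$i\<bar> else 0) + 2 * \<bar>v$i - y$i\<bar> + (\<bar>y$i + g$i\<bar> - \<bar>y$i\<bar>))"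
      by (rule sum_mono) (rule term_bound, simp)
    also have "\<dots> = 2 * (\<Sum>i<N. if v$i \<noteq> 0 then \<bar>g$i\<bar> else 0) + 2 * t + ((\<Sum>i<N. \<bar>y$i + g$i\<bar>) - (\<Sum>i<N. \<bar>y$i\<bar>))"
      unfolding t' by (simp add: sum.distrib sum_subtractf sum_distrib_left)
    also have "(\<Sum>i<N. if v$i \<noteq> 0 then \<bar>g$i\<bar> else 0) = (\<Sum>i\<in>T. \<bar>g$i\<bar>)"
    proof -
      have Te: "T = {i \<in> {..<N}. v$i \<noteq> 0}" unfolding T_def by auto
      have "(\<Sum>i\<in>T. \<bar>g$i\<bar>) = (\<Sum>i\<in>{..<N}. if v$i \<noteq> 0 then \<bar>g$i\<bar> else 0)"
        unfolding Te by (rule sum.inter_filter) simp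
      then show ?thesis by simp
    qed
    finally have g1: "(\<Sum>i<N. \<bar>g$i\<bar>) \<le> 2 * (\<Sum>i\<in>T. \<bar>g$i\<bar>) + 2 * t"
      using optyg by linarith
    have "(\<Sum>i\<in>T. \<bar>g$i\<bar>) \<le> sqrt (real (card T)) * sqrt (\<Sum>i\<in>T. (g$i)^2)"
      by (rule cs_sum[OF fT])
    also have "\<dots> \<le> sqrt (real s) * sqrt (\<Sum>i<N. (g$i)^2)"
    proof (rule mult_mono)
      show "sqrt (real (card T)) \<le> sqrt (real s)" using card unfolding T_def by simp
      show "sqrt (\<Sum>i\<in>T. (g$i)^2) \<le> sqrt (\<Sum>i<N. (g$i)^2)"
        by (rule real_sqrt_le_mono, rule sum_mono2) (auto simp: T_def)
    qed (auto simp: sum_nonneg)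
    also have "\<dots> \<le> sqrt (real s) * (2^\<beta> * H)"
      using g2 by (simp add: mult_left_mono)
    finally have gT: "(\<Sum>i\<in>T. \<bar>g$i\<bar>) \<le> sqrt (real s) * (2^\<beta> * H)" .
    have "H^2 \<le> K * (2 * (sqrt (real s) * (2^\<beta> * H)) + 2 * t)"
    proof -
      have "(\<Sum>i<N. \<bar>g$i\<bar>) \<le> 2 * (sqrt (real s) * (2^\<beta> * H)) + 2 * t" using g1 gT by linarith
      then have "K * (\<Sum>i<N. \<bar>g$i\<bar>) \<le> K * (2 * (sqrt (real s) * (2^\<beta> * H)) + 2 * t)"
        using K0 by (intro mult_left_mono)
      then show ?thesis using H2g by linarith
    qed
    moreover have "K * (2 * (sqrt (real s) * (2^\<beta> * H)) + 2 * t) = K * (2 * (sqrt (real s) * (2^\<beta> * H))) + 2 * K * t"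
      by (simp add: distrib_left)
    ultimately show ?thesis using KA by linarith
  qed
  define \<sigma> where "\<sigma> = sigma_s s y"
  have \<sigma>S: "\<sigma> = Inf S" unfolding \<sigma>_def sigma_s_def S_def ..
  have \<sigma>0: "0 \<le> \<sigma>" unfolding \<sigma>S
    by (rule cInf_greatest[OF Sne]) (auto simp: S_def l1_norm_def sum_nonneg)
  have K1: "0 < K" using \<delta> by (simp add: K_def)
  have "(H^2 - A * H) / (2 * K) \<le> \<sigma>" unfolding \<sigma>S
  proof (rule cInf_greatest[OF Sne])
    fix t assume "t \<in> S"
    then have "H^2 - A * H \<le> t * (2 * K)" using bnd by (simp add: mult.commute)
    then show "(H^2 - A * H) / (2 * K) \<le> t" using K1 by (simp add: pos_divide_le_eq)
  qed
  then have "H^2 - A * H \<le> 2 * K * \<sigma>" using K1 by (simp add: pos_divide_le_eq mult.commute)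
  then have Hb: "H \<le> A + sqrt (2 * K * \<sigma>)"
    by (intro quad_bound H0 A0) (use K0 \<sigma>0 in simp_all)
  have "sqrt (2 * K * \<sigma>) \<le> 2^(r+1) * sqrt (\<sigma> * \<delta>)"
  proof -
    have "2 * K * \<sigma> = 2^(r-\<beta>+1) * (\<sigma> * \<delta>)" unfolding K_def by (simp add: algebra_simps)
    then have "sqrt (2 * K * \<sigma>) = sqrt (2^(r-\<beta>+1) * (\<sigma> * \<delta>))" by (rule arg_cong)
    also have "\<dots> = sqrt (2^(r-\<beta>+1)) * sqrt (\<sigma> * \<delta>)" by (rule real_sqrt_mult)
    finally have "sqrt (2 * K * \<sigma>) = sqrt (2^(r-\<beta>+1)) * sqrt (\<sigma> * \<delta>)" .
    moreover have "sqrt ((2::real)^(r-\<beta>+1)) \<le> 2^(r+1)"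
    proof -
      define X :: real where "X = 2^(r-\<beta>+1)"
      have one: "1 \<le> X" unfolding X_def by (rule one_le_power) simp
      have "X * 1 \<le> X * X" by (rule mult_left_mono[OF one]) (use one in simp)
      then have "sqrt X \<le> X" by (intro real_le_lsqrt) (use one in \<open>simp_all add: power2_eq_square\<close>)
      then have "sqrt ((2::real)^(r-\<beta>+1)) \<le> 2^(r-\<beta>+1)" unfolding X_def .
      also have "\<dots> \<le> 2^(r+1)" by (rule power_increasing) auto
      finally show ?thesis .
    qed
    ultimately show ?thesis using \<sigma>0 \<delta> by (simp add: mult_right_mono)
  qed
  then have "H \<le> 2^(r+1) * (sqrt (real s) * \<delta> + sqrt (\<sigma> * \<delta>))"
    using Hb unfolding A_def by (simp add: algebra_simps)
  then show "l2_norm (xhat - x) \<le> 2^(r+1) * (sqrt (real s) * \<delta> + sqrt (sigma_s s (transpose_mat (Dmat N ^\<^sub>m \<beta>) *\<^sub>v x) * \<delta>))"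
    unfolding H_def h_def \<sigma>_def y_def M_def .
qed

end
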